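(* Let $v>0$, $q>0$ and let $\kappa\ge -q/4$ be real; put $s=\frac12+\sqrt{\frac{\kappa}{q}+\frac14}$. For each integer $n\ge0$ with $n+s<\sqrt{v/q}$, the function $$\psi_n(r)=e^{-\left(\frac{v}{2q(n+s)}-\frac{n+s}{2}\right)r}\left(1-q\,e^{-r}\right)^{s}\;{}_2F_1\!\left(-n,\,s+\frac{v}{q(n+s)};\,1-n-s+\frac{v}{q(n+s)};\,q\,e^{-r}\right)$$ satisfies, on $r\in(\log q,\infty)$, $$-\psi_n''(r)+\left(\frac{\kappa\,e^{-r}}{(1-q\,e^{-r})^2}-\frac{v\,e^{-r}}{1-q\,e^{-r}}\right)\psi_n(r)=\mathfrak E_n\,\psi_n(r),\qquad \mathfrak E_n=-\left(\frac{v}{2q(n+s)}-\frac{n+s}{2}\right)^2,$$ together with $\psi_n(\log q)=\psi_n(\infty)=0$. In particular, for $\kappa=q\,j(j+1)$ with $j\in\{0,1,2,\dots\}$ one has $s=j+1$ and $\mathfrak E_n=-\left(\frac{v}{2q(n+j+1)}-\frac{n+j+1}{2}\right)^2$.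
   Context: ${}_2F_1(\alpha,\beta;\gamma;z)=\sum_{k\ge0}\frac{(\alpha)_k(\beta)_k}{(\gamma)_k k!}z^k$ is the Gauss hypergeometric function, with $(a)_k$ the Pochhammer symbol; for $\alpha=-n$ it is a polynomial in $z$. *)

theory Defs
  imports "HOL-Analysis.Analysis"
begin

text \<open>Gauss hypergeometric function as its defining power series
  (for a = -n only finitely many terms are nonzero, so it is a polynomial).\<close>
definition hyp2F1 :: "real \<Rightarrow> real \<Rightarrow> real \<Rightarrow> real \<Rightarrow> real" where
  "hyp2F1 a b c z =
     (\<Sum>k. pochhammer a k * pochhammer b k / (pochhammer c k * fact k) * z ^ k)"

definition s_par :: "real \<Rightarrow> real \<Rightarrow> real" where
  "s_par q \<kappa> = 1/2 + sqrt (\<kappa> / q + 1/4)"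

definition E_n :: "real \<Rightarrow> real \<Rightarrow> real \<Rightarrow> nat \<Rightarrow> real" where
  "E_n v q \<kappa> n = - ((v / (2 * q * (n + s_par q \<kappa>)) - (n + s_par q \<kappa>) / 2) ^ 2)"

definition psi_n :: "real \<Rightarrow> real \<Rightarrow> real \<Rightarrow> nat \<Rightarrow> real \<Rightarrow> real" where
  "psi_n v q \<kappa> n r =
     (let s = s_par q \<kappa> in
      exp (- (v / (2 * q * (n + s)) - (n + s) / 2) * r)
      * (1 - q * exp (- r)) powr s
      * hyp2F1 (- real n) (s + v / (q * (n + s))) (1 - n - s + v / (q * (n + s))) (q * exp (- r)))"

definition potential :: "real \<Rightarrow> real \<Rightarrow> real \<Rightarrow> real \<Rightarrow> real" where
  "potential v q \<kappa> r = \<kappa> * exp (- r) / (1 - q * exp (- r)) ^ 2 - v * exp (- r) / (1 - q * exp (- r))"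

end

theory Submission
  imports Defs "HOL-Computational_Algebra.Polynomial" "HOL-Real_Asymp.Real_Asymp"
begin

definition cfh :: "real \<Rightarrow> real \<Rightarrow> real \<Rightarrow> nat \<Rightarrow> real" where
  "cfh a b c k = pochhammer a k * pochhammer b k / (pochhammer c k * fact k)"

definition Ph :: "nat \<Rightarrow> real \<Rightarrow> real \<Rightarrow> real poly" where
  "Ph n b c = (\<Sum>k\<le>n. monom (cfh (- real n) b c k) k)"

lemma cfh_zero: "k > n \<Longrightarrow> cfh (- real n) b c k = 0"
  unfolding cfh_def using pochhammer_of_nat_eq_0_iff[of n k, where 'a=real] by simp

lemma coeff_Ph: "coeff (Ph n b c) k = cfh (- real n) b c k"
proof -
  have "coeff (Ph n b c) k = (\<Sum>j\<le>n. if j = k then cfh (- real n) b c j else 0)"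
    unfolding Ph_def coeff_sum coeff_monom by (intro sum.cong) auto
  also have "\<dots> = cfh (- real n) b c k"
    using cfh_zero[of n k] by (auto simp: sum.delta)
  finally show ?thesis .
qed

lemma hyp_Ph: "hyp2F1 (- real n) b c z = poly (Ph n b c) z"
proof -
  have "(\<lambda>k. cfh (- real n) b c k * z ^ k) sums (\<Sum>k\<le>n. cfh (- real n) b c k * z ^ k)"
    by (rule sums_finite) (auto simp: cfh_zero)
  moreover have "poly (Ph n b c) z = (\<Sum>k\<le>n. cfh (- real n) b c k * z ^ k)"
    unfolding Ph_def poly_sum poly_monom by simp
  ultimately show ?thesis unfolding hyp2F1_def cfh_def[symmetric] using sums_unique by metis
qed

lemma cfh_rec:
  assumes "c > 0"
  shows "cfh a b c (Suc k) * (real k + 1) * (c + real k) = cfh a b c k * (a + real k) * (b + real k)"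
proof -
  have p: "pochhammer c k > 0" using assms by (rule pochhammer_pos)
  have "c + real k > 0" using assms by simp
  have f: "fact k > (0::real)" by simp
  have "cfh a b c (Suc k) = (pochhammer a k * pochhammer b k / (pochhammer c k * fact k))
      * ((a + real k) * (b + real k) / ((c + real k) * (real k + 1)))"
    unfolding cfh_def pochhammer_rec' fact_Suc by (simp add: field_simps)
  moreover have "cfh a b c k = pochhammer a k * pochhammer b k / (pochhammer c k * fact k)"
    unfolding cfh_def ..
  moreover have "X * ((A * B) / (C * K)) * K * C = X * A * B"
    if "C \<noteq> 0" "K \<noteq> 0" for X A B C K :: real
    using that by simp
  moreover have "real k + 1 \<noteq> 0" by simp
  ultimately show ?thesis using \<open>c + real k > 0\<close> by (metis less_irrefl)
qed

lemma Ph_ode: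
  assumes "c > 0"
  shows "z*(1-z)*poly (pderiv (pderiv (Ph n b c))) z + (c - (- real n + b + 1)*z) * poly (pderiv (Ph n b c)) z
     - (- real n) * b * poly (Ph n b c) z = 0"
proof -
  define P where "P = Ph n b c"
  define a where "a = - real n"
  define d where "d = - (a + b + 1)"
  define Q where "Q = pCons 0 (pderiv (pderiv P)) - pCons 0 (pCons 0 (pderiv (pderiv P)))
     + smult c (pderiv P) + pCons 0 (smult d (pderiv P)) - smult (a*b) P"
  have cP: "coeff P k = cfh a b c k" for k unfolding P_def a_def coeff_Ph ..
  have "Q = 0"
  proof (rule poly_eqI)
    fix k
    have r: "cfh a b c (Suc k) * (real k + 1) * (c + real k) = cfh a b c k * (a + real k) * (b + real k)"
      using cfh_rec[OF assms] .
    show "coeff Q k = coeff 0 k"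
    proof (cases k)
      case 0
      then show ?thesis using r unfolding Q_def by (simp add: coeff_pderiv cP algebra_simps)
    next
      case (Suc j)
      then show ?thesis using r unfolding Q_def d_def
        by (cases j) (simp_all add: coeff_pderiv cP algebra_simps)
    qed
  qed
  then have "poly Q z = 0" by simp
  then show ?thesis unfolding Q_def P_def[symmetric] a_def[symmetric] d_def
    by (simp add: algebra_simps)
qed
lemma key_alg:
  fixes z u F0 F1 F2 nn s w q :: real
  assumes u: "u = 1 - z" "u > 0" and q: "q > 0"
   and rel: "z*u*F2 + ((1 - (nn+s) + w) - (-nn + (s+w) + 1)*z)*F1 - (-nn)*(s+w)*F0 = 0"
  shows "-((-((w-(nn+s))/2) + s*z/u)*(-((w-(nn+s))/2)*F0 + s*(z/u)*F0 - z*F1)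
      + (((w-(nn+s))/2)*z*F1 + s*(-z/u^2)*F0 + s*(z/u)*(-z*F1) + z*F1 + z^2*F2))
      + ((q*(s^2-s))*(z/q)/u^2 - (q*w*(nn+s))*(z/q)/u)*F0 = -(((w-(nn+s))/2)^2)*F0"
proof -
  have e: "u^2 * (-((-((w-(nn+s))/2) + s*z/u)*(-((w-(nn+s))/2)*F0 + s*(z/u)*F0 - z*F1)
      + (((w-(nn+s))/2)*z*F1 + s*(-z/u^2)*F0 + s*(z/u)*(-z*F1) + z*F1 + z^2*F2))
      + ((q*(s^2-s))*(z/q)/u^2 - (q*w*(nn+s))*(z/q)/u)*F0 - (-(((w-(nn+s))/2)^2)*F0))
      = -z*u*(z*u*F2 + ((1 - (nn+s) + w) - (-nn + (s+w) + 1)*z)*F1 - (-nn)*(s+w)*F0)"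
    using u q by (simp add: field_simps power2_eq_square) (simp add: u(1) algebra_simps)
  have "u^2 * (-((-((w-(nn+s))/2) + s*z/u)*(-((w-(nn+s))/2)*F0 + s*(z/u)*F0 - z*F1)
      + (((w-(nn+s))/2)*z*F1 + s*(-z/u^2)*F0 + s*(z/u)*(-z*F1) + z*F1 + z^2*F2))
      + ((q*(s^2-s))*(z/q)/u^2 - (q*w*(nn+s))*(z/q)/u)*F0 - (-(((w-(nn+s))/2)^2)*F0)) = 0"
    unfolding e rel by simp
  then show ?thesis using u by simp
qed

theorem mainTheorem4:
  fixes v q \<kappa> :: real and n :: nat
  assumes "v > 0" and "q > 0" and "\<kappa> \<ge> - q / 4"
    and "real n + s_par q \<kappa> < sqrt (v / q)"
  shows "(\<exists>\<psi>1 \<psi>2. \<forall>r. r > ln q \<longrightarrow>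
            (psi_n v q \<kappa> n has_real_derivative \<psi>1 r) (at r)
          \<and> (\<psi>1 has_real_derivative \<psi>2 r) (at r)
          \<and> - \<psi>2 r + potential v q \<kappa> r * psi_n v q \<kappa> n r = E_n v q \<kappa> n * psi_n v q \<kappa> n r)
    \<and> psi_n v q \<kappa> n (ln q) = 0
    \<and> (psi_n v q \<kappa> n \<longlongrightarrow> 0) at_top
    \<and> (\<forall>j::nat. \<kappa> = q * real j * (real j + 1) \<longrightarrow>
          s_par q \<kappa> = real j + 1
        \<and> E_n v q \<kappa> n = - ((v / (2 * q * (real n + real j + 1)) - (real n + real j + 1) / 2) ^ 2))"
proof -
  note v = assms(1) and q = assms(2)
  define s where "s = s_par q \<kappa>"
  define m where "m = real n + s"
  define w where "w = v / (q * m)"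
  define a where "a = (w - m) / 2"
  define b where "b = s + w"
  define c where "c = 1 - m + w"
  define P where "P = Ph n b c"
  have rad: "\<kappa> / q + 1/4 \<ge> 0"
  proof -
    have "(\<kappa> + q/4) / q \<ge> 0" using assms(3) q by simp
    also have "(\<kappa> + q/4) / q = \<kappa> / q + 1/4" using q by (simp add: field_simps)
    finally show ?thesis .
  qed
  have s_ge: "s \<ge> 1/2" unfolding s_def s_par_def using rad by simp
  have ss: "s^2 - s = \<kappa> / q"
  proof -
    have "(sqrt (\<kappa> / q + 1/4))^2 = \<kappa> / q + 1/4" using rad by simp
    then show ?thesis unfolding s_def s_par_def by (simp add: power2_eq_square algebra_simps)
  qed
  have kap: "\<kappa> = q * (s^2 - s)" using ss q by simp
  have m_pos: "m > 0" unfolding m_def using s_ge by simp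
  have "m < sqrt (v / q)" using assms(4) unfolding m_def s_def .
  then have "m^2 < (sqrt (v / q))^2" using m_pos by (intro power_strict_mono) auto
  then have "m^2 < v / q" using v q by simp
  then have "m * m < v / q" by (simp add: power2_eq_square)
  then have "m < w" unfolding w_def using m_pos q by (simp add: field_simps)
  then have a_pos: "a > 0" and c_pos: "c > 0" unfolding a_def c_def by auto
  have vw: "v = q * w * m" unfolding w_def using q m_pos by simp
  have psi_eq: "psi_n v q \<kappa> n r = exp (- a * r) * (1 - q * exp (- r)) powr s * poly P (q * exp (- r))" for r
  proof -
    have "v / (2 * q * (real n + s)) - (real n + s) / 2 = a"
    proof -
      have "v / (2 * q * (real n + s)) = w / 2" unfolding w_def m_def by simp
      then show ?thesis unfolding a_def m_def by (simp add: diff_divide_distrib)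
    qed
    moreover have "1 - real n - s + v / (q * (real n + s)) = c" unfolding c_def w_def m_def by simp
    moreover have "s + v / (q * (real n + s)) = b" unfolding b_def w_def m_def by simp
    ultimately show ?thesis unfolding psi_n_def Let_def s_def[symmetric] P_def hyp_Ph by simp
  qed
  have En: "E_n v q \<kappa> n = - (a^2)"
  proof -
    have "v / (2 * q * (real n + s)) - (real n + s) / 2 = a"
    proof -
      have "v / (2 * q * (real n + s)) = w / 2" unfolding w_def m_def by simp
      then show ?thesis unfolding a_def m_def by (simp add: diff_divide_distrib)
    qed
    then show ?thesis unfolding E_n_def s_def[symmetric] by simp
  qed
  define Z where "Z r = q * exp (- r)" for r
  define U where "U r = 1 - Z r" for r
  define Ef where "Ef r = exp (- a * r)" for r
  define S where "S r = U r powr s" for r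
  define F0 where "F0 r = poly P (Z r)" for r
  define F1 where "F1 r = poly (pderiv P) (Z r)" for r
  define F2 where "F2 r = poly (pderiv (pderiv P)) (Z r)" for r
  define H where "H r = -a*F0 r + s*(Z r/U r)*F0 r - Z r*F1 r" for r
  define H' where "H' r = a*Z r*F1 r + s*(-Z r/U r^2)*F0 r + s*(Z r/U r)*(-Z r*F1 r) + Z r*F1 r + Z r^2*F2 r" for r
  define \<psi>1 where "\<psi>1 r = Ef r * S r * H r" for r
  define \<psi>2 where "\<psi>2 r = Ef r * S r * ((-a + s*Z r/U r)*H r + H' r)" for r
  have psi_eq2: "psi_n v q \<kappa> n = (\<lambda>r. Ef r * S r * F0 r)"
    unfolding psi_eq Ef_def S_def U_def Z_def F0_def by auto
  have U_pos: "U r > 0" if "r > ln q" for r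
  proof -
    have "exp (- r) < exp (- ln q)" using that by simp
    then have "q * exp (- r) < 1" using q by (simp add: exp_minus field_simps)
    then show ?thesis unfolding U_def Z_def by simp
  qed
  have dZ: "(Z has_real_derivative - Z r) (at r)" for r
    unfolding Z_def[abs_def] by (auto intro!: derivative_eq_intros)
  have dU: "(U has_real_derivative Z r) (at r)" for r
    unfolding U_def[abs_def] using dZ[of r] by (auto intro!: derivative_eq_intros)
  have dEf: "(Ef has_real_derivative - a * Ef r) (at r)" for r
    unfolding Ef_def[abs_def] by (auto intro!: derivative_eq_intros)
  have dS: "(S has_real_derivative S r * (s * Z r / U r)) (at r)" if "r > ln q" for r
  proof -
    have "((\<lambda>r. U r powr s) has_real_derivative (s * U r powr (s - 1)) * Z r) (at r)"
      by (rule DERIV_chain2[OF has_real_derivative_powr[OF U_pos[OF that]] dU])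
    moreover have "(s * U r powr (s - 1)) * Z r = S r * (s * Z r / U r)"
      unfolding S_def using U_pos[OF that] by (simp add: powr_diff)
    ultimately show ?thesis unfolding S_def[abs_def] by simp
  qed
  have dF0: "(F0 has_real_derivative - Z r * F1 r) (at r)" for r
  proof -
    have "((\<lambda>r. poly P (Z r)) has_real_derivative (- Z r) * poly (pderiv P) (Z r)) (at r)"
      by (rule has_field_derivative_poly[OF dZ])
    then show ?thesis unfolding F0_def[abs_def] F1_def by simp
  qed
  have dF1: "(F1 has_real_derivative - Z r * F2 r) (at r)" for r
  proof -
    have "((\<lambda>r. poly (pderiv P) (Z r)) has_real_derivative (- Z r) * poly (pderiv (pderiv P)) (Z r)) (at r)"
      by (rule has_field_derivative_poly[OF dZ])
    then show ?thesis unfolding F1_def[abs_def] F2_def by simp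
  qed
  have UZ: "U r + Z r = 1" for r unfolding U_def by simp
  have dH: "(H has_real_derivative H' r) (at r)" if "r > ln q" for r
  proof -
    have u: "U r \<noteq> 0" using U_pos[OF that] by simp
    have "(H has_real_derivative
        -a*(- Z r * F1 r) + s*(((- Z r) * U r - Z r * Z r) / (U r * U r) * F0 r + (Z r/U r) * (- Z r * F1 r))
        - ((- Z r) * F1 r + Z r * (- Z r * F2 r))) (at r)"
      unfolding H_def[abs_def]
      by (rule derivative_eq_intros dZ dU dF0 dF1 refl u | simp add: u divide_simps | simp add: algebra_simps)+
    moreover have "-a*(- Z r * F1 r) + s*(((- Z r) * U r - Z r * Z r) / (U r * U r) * F0 r + (Z r/U r) * (- Z r * F1 r))
        - ((- Z r) * F1 r + Z r * (- Z r * F2 r)) = H' r"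
    proof -
      have zz: "(- Z r) * U r - Z r * Z r = - Z r" using UZ[of r] by algebra
      show ?thesis unfolding zz H'_def by (simp add: power2_eq_square algebra_simps)
    qed
    ultimately show ?thesis by simp
  qed
  have part1: "\<forall>r. r > ln q \<longrightarrow>
            (psi_n v q \<kappa> n has_real_derivative \<psi>1 r) (at r)
          \<and> (\<psi>1 has_real_derivative \<psi>2 r) (at r)
          \<and> - \<psi>2 r + potential v q \<kappa> r * psi_n v q \<kappa> n r = E_n v q \<kappa> n * psi_n v q \<kappa> n r"
  proof (intro allI impI conjI)
    fix r assume r: "r > ln q"
    have u: "U r \<noteq> 0" using U_pos[OF r] by simp
    have "((\<lambda>r. Ef r * S r * F0 r) has_real_derivative \<psi>1 r) (at r)"
      by (rule DERIV_cong[OF DERIV_mult'[OF DERIV_mult'[OF dEf dS[OF r]] dF0]])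
        (simp add: \<psi>1_def H_def algebra_simps)
    then show "(psi_n v q \<kappa> n has_real_derivative \<psi>1 r) (at r)" unfolding psi_eq2 by simp
    have "((\<lambda>r. Ef r * S r * H r) has_real_derivative \<psi>2 r) (at r)"
      by (rule DERIV_cong[OF DERIV_mult'[OF DERIV_mult'[OF dEf dS[OF r]] dH[OF r]]])
        (simp add: \<psi>2_def algebra_simps)
    then show "(\<psi>1 has_real_derivative \<psi>2 r) (at r)" unfolding \<psi>1_def[abs_def] by simp
    have rel: "Z r * U r * F2 r + ((1 - (real n + s) + w) - (- real n + (s + w) + 1) * Z r) * F1 r
        - (- real n) * (s + w) * F0 r = 0"
      using Ph_ode[OF c_pos, of "Z r" n b] unfolding F0_def F1_def F2_def P_def U_def b_def c_def m_def
      by simp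
    have key: "-((-a + s*Z r/U r)*H r + H' r) + ((q*(s^2-s))*(Z r/q)/U r^2 - (q*w*(real n+s))*(Z r/q)/U r)*F0 r
        = -(a^2)*F0 r"
      using key_alg[OF U_def U_pos[OF r] q rel] unfolding H_def H'_def a_def m_def by simp
    have pot: "potential v q \<kappa> r = (q*(s^2-s))*(Z r/q)/U r^2 - (q*w*(real n+s))*(Z r/q)/U r"
      unfolding potential_def Z_def U_def using q vw[unfolded m_def] kap by simp
    show "- \<psi>2 r + potential v q \<kappa> r * psi_n v q \<kappa> n r = E_n v q \<kappa> n * psi_n v q \<kappa> n r"
      unfolding psi_eq2 En pot \<psi>2_def
    proof -
      have "Ef r * S r * (-((-a + s*Z r/U r)*H r + H' r) + ((q*(s^2-s))*(Z r/q)/U r^2 - (q*w*(real n+s))*(Z r/q)/U r)*F0 r)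
          = Ef r * S r * (-(a^2)*F0 r)" using key by simp
      then show "- (Ef r * S r * ((- a + s * Z r / U r) * H r + H' r)) +
          (q * (s\<^sup>2 - s) * (Z r / q) / (U r)\<^sup>2 - q * w * (real n + s) * (Z r / q) / U r) * (Ef r * S r * F0 r) =
          - a\<^sup>2 * (Ef r * S r * F0 r)" by (simp add: algebra_simps)
    qed
  qed
  have part2: "psi_n v q \<kappa> n (ln q) = 0"
    unfolding psi_eq using q s_ge by (simp add: exp_minus)
  have part3: "(psi_n v q \<kappa> n \<longlongrightarrow> 0) at_top"
  proof -
    have lz: "((\<lambda>r. q * exp (- r)) \<longlongrightarrow> 0) at_top" by real_asymp
    have le: "((\<lambda>r. exp (- a * r)) \<longlongrightarrow> 0) at_top" using a_pos by real_asymp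
    have lS: "((\<lambda>r. (1 - q * exp (- r)) powr s) \<longlongrightarrow> (1 - 0) powr s) at_top"
      by (intro tendsto_powr tendsto_diff tendsto_const lz) simp
    have lP: "((\<lambda>r. poly P (q * exp (- r))) \<longlongrightarrow> poly P 0) at_top"
      by (rule isCont_tendsto_compose[OF poly_isCont lz])
    have "((\<lambda>r. exp (- a * r) * (1 - q * exp (- r)) powr s * poly P (q * exp (- r))) \<longlongrightarrow> 0 * (1 - 0) powr s * poly P 0) at_top"
      by (intro tendsto_mult le lS lP)
    then show ?thesis unfolding psi_eq by simp
  qed
  have part4: "\<forall>j::nat. \<kappa> = q * real j * (real j + 1) \<longrightarrow>
          s_par q \<kappa> = real j + 1
        \<and> E_n v q \<kappa> n = - ((v / (2 * q * (real n + real j + 1)) - (real n + real j + 1) / 2) ^ 2)"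
  proof (intro allI impI)
    fix j :: nat assume kj: "\<kappa> = q * real j * (real j + 1)"
    have "\<kappa> / q + 1/4 = (real j + 1/2)^2" using kj q by (simp add: field_simps power2_eq_square)
    then have "sqrt (\<kappa> / q + 1/4) = real j + 1/2" by simp
    then have sj: "s_par q \<kappa> = real j + 1" unfolding s_par_def by simp
    show "s_par q \<kappa> = real j + 1
        \<and> E_n v q \<kappa> n = - ((v / (2 * q * (real n + real j + 1)) - (real n + real j + 1) / 2) ^ 2)"
      using sj unfolding E_n_def by (simp add: add.assoc)
  qed
  show ?thesis using part1 part2 part3 part4 by blast
qed

end
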